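(* Fix an integer $d\ge 2$ and $\theta>0$, and regard $F$ (defined in the context) as an affine function of the real variables $\sigma_{CC,kl},\sigma_{CD,kl},\sigma_{DD,kl}$, $k,l\in\{0,\ldots,d-1\}$, with all other quantities held fixed. Then, for every $k,l\in\{0,\ldots,d-1\}$: (i) the coefficient of $\sigma_{CC,kl}$ in $F$ is strictly negative; (ii) the coefficient of $\sigma_{DD,kl}$ in $F$ is strictly positive; (iii) the coefficient of $\sigma_{CD,kl}$ in $F$ is strictly positive if $k+l>d-1$, strictly negative if $k+l<d-1$, and zero if $k+l=d-1$. Consequently, decreasing any $\sigma_{CC,kl}$ or increasing any $\sigma_{DD,kl}$ increases $F$; increasing $\sigma_{CD,kl}$ increases $F$ when $k+l>d-1$, decreases it when $k+l<d-1$, and leaves it unchanged when $k+l=d-1$.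
   Context: Model: in a large well-mixed population, individuals use strategy $C$ (cooperate) or $D$ (defect) and interact in random groups of size $d$. A $C$-player (resp. $D$-player) whose $d-1$ partners include $k$ cooperators receives the random payoff $a_k$ (resp. $b_k$), $k=0,\ldots,d-1$. Payoffs are redrawn independently at each time step, and for a selection intensity $\delta\ge 0$ they satisfy $E[a_k]=\mu_{C,k}\delta+o(\delta)$, $E[b_k]=\mu_{D,k}\delta+o(\delta)$, $E[a_ka_l]=\sigma_{CC,kl}\delta+o(\delta)$, $E[b_kb_l]=\sigma_{DD,kl}\delta+o(\delta)$, $E[a_kb_l]=\sigma_{CD,kl}\delta+o(\delta)$, with all moments of order at least $3$ being $o(\delta)$. The population evolves by a Moran birth–death process with fitness $1+{}$payoff and symmetric mutation, with scaled mutation rate $\theta>0$. For integers $0\le k\le n$ define $$\psi_n^k=\frac{\prod_{i=1}^{k}(\theta+i-1)\prod_{j=1}^{n-k}(\theta+j-1)}{\prod_{l=1}^{n}(2\theta+l-1)}$$ (empty products equal $1$), and define $$F=\sum_{k=0}^{d-1}\binom{d-1}{k}\psi_{d+1}^{k+1}(\mu_{C,k}-\mu_{D,k})+\sum_{k,l=0}^{d-1}\binom{d-1}{k}\binom{d-1}{l}\Big[-\psi_{2d+1}^{k+l+2}(\sigma_{CC,kl}-\sigma_{CD,kl})+\psi_{2d+1}^{k+l+1}(\sigma_{DD,kl}-\sigma_{CD,kl})\Big].$$ In the paper's large-population, weak-selection approximation, the stationary average abundance of $C$ is $\tfrac12+\tfrac{\delta(1-u)}{u}F$ to first order in $\delta$,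 where $u$ is the per-step mutation probability. Thus weak selection favors the abundance of $C$ iff $F>0$, and increasing (resp. decreasing) $F$ increases (resp. decreases) the average abundance of $C$. *)

theory Defs
  imports Complex_Main
begin

definition psi :: "real \<Rightarrow> nat \<Rightarrow> nat \<Rightarrow> real" where
  "psi \<theta> n k =
     (\<Prod>i=1..k. \<theta> + real i - 1) * (\<Prod>j=1..n-k. \<theta> + real j - 1)
     / (\<Prod>l=1..n. 2 * \<theta> + real l - 1)"

definition Fval :: "nat \<Rightarrow> real \<Rightarrow> (nat \<Rightarrow> real) \<Rightarrow> (nat \<Rightarrow> real)
    \<Rightarrow> (nat \<Rightarrow> nat \<Rightarrow> real) \<Rightarrow> (nat \<Rightarrow> nat \<Rightarrow> real) \<Rightarrow> (nat \<Rightarrow> nat \<Rightarrow> real) \<Rightarrow> real" where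
  "Fval d \<theta> muC muD sCC sCD sDD =
     (\<Sum>k=0..d-1. real ((d-1) choose k) * psi \<theta> (d+1) (k+1) * (muC k - muD k))
   + (\<Sum>k=0..d-1. \<Sum>l=0..d-1. real ((d-1) choose k) * real ((d-1) choose l) *
        (- psi \<theta> (2*d+1) (k+l+2) * (sCC k l - sCD k l)
         + psi \<theta> (2*d+1) (k+l+1) * (sDD k l - sCD k l)))"

end

theory Submission
  imports Defs
begin

lemma prod_shift_pos: "\<theta> > 0 \<Longrightarrow> (\<Prod>i=1..m. \<theta> + real i - 1) > (0::real)"
  by (rule prod_pos) auto

lemma psi_pos: "\<theta> > 0 \<Longrightarrow> psi \<theta> n m > 0"
  unfolding psi_def
  using prod_shift_pos[of \<theta>] prod_shift_pos[of "2*\<theta>"]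
  by (intro divide_pos_pos mult_pos_pos) (auto intro!: prod_pos)

lemma psi_step:
  assumes "n = m + Suc j"
  shows "psi \<theta> n (Suc m) * (\<theta> + real j) = psi \<theta> n m * (\<theta> + real m)"
proof -
  have a: "(\<Prod>i=1..Suc m. \<theta> + real i - 1) = (\<Prod>i=1..m. \<theta> + real i - 1) * (\<theta> + real m)"
    by (simp add: prod.nat_ivl_Suc')
  have b: "(\<Prod>i=1..Suc j. \<theta> + real i - 1) = (\<Prod>i=1..j. \<theta> + real i - 1) * (\<theta> + real j)"
    by (simp add: prod.nat_ivl_Suc')
  have c: "n - Suc m = j" "n - m = Suc j" using assms by auto
  show ?thesis unfolding psi_def c a b by (simp add: field_simps)
qed

lemma dsum_upd:
  fixes g :: "nat \<Rightarrow> nat \<Rightarrow> real \<Rightarrow> real"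
  assumes "k < d" "l < d"
  shows "(\<Sum>k'=0..d-1. \<Sum>l'=0..d-1. g k' l' ((h(k := (h k)(l := h k l + t))) k' l'))
       = (\<Sum>k'=0..d-1. \<Sum>l'=0..d-1. g k' l' (h k' l')) + (g k l (h k l + t) - g k l (h k l))"
proof -
  have e: "g k' l' ((h(k := (h k)(l := h k l + t))) k' l')
      = g k' l' (h k' l') + (if k' = k then (if l' = l then g k l (h k l + t) - g k l (h k l) else 0) else 0)"
    for k' l' by auto
  have k: "k \<in> {0..d-1}" and l: "l \<in> {0..d-1}" using assms by auto
  define D where "D = g k l (h k l + t) - g k l (h k l)"
  have inner: "(\<Sum>l'=0..d-1. if k' = k then (if l' = l then D else 0) else 0) = (if k' = k then D else 0)" for k'
    using l by (cases "k' = k") simp_all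
  show ?thesis unfolding e sum.distrib D_def[symmetric] inner using k
    by simp
qed

theorem mainTheorem2:
  fixes d :: nat and \<theta> :: real
  assumes "d \<ge> 2" and "\<theta> > 0"
  shows "\<forall>k<d. \<forall>l<d.
     (\<exists>c<0. \<forall>muC muD sCC sCD sDD t.
        Fval d \<theta> muC muD (sCC(k := (sCC k)(l := sCC k l + t))) sCD sDD
          = Fval d \<theta> muC muD sCC sCD sDD + c * t)
   \<and> (\<exists>c>0. \<forall>muC muD sCC sCD sDD t.
        Fval d \<theta> muC muD sCC sCD (sDD(k := (sDD k)(l := sDD k l + t)))
          = Fval d \<theta> muC muD sCC sCD sDD + c * t)
   \<and> (\<exists>c. (if k + l > d - 1 then c > 0 else if k + l < d - 1 then c < 0 else c = 0)
        \<and> (\<forall>muC muD sCC sCD sDD t.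
        Fval d \<theta> muC muD sCC (sCD(k := (sCD k)(l := sCD k l + t))) sDD
          = Fval d \<theta> muC muD sCC sCD sDD + c * t))"
proof (intro allI impI conjI)
  fix k l assume kd: "k < d" and ld: "l < d"
  define B where "B = real ((d-1) choose k) * real ((d-1) choose l)"
  have Bpos: "B > 0" unfolding B_def using kd ld by auto
  define p2 where "p2 = psi \<theta> (2*d+1) (k+l+2)"
  define p1 where "p1 = psi \<theta> (2*d+1) (k+l+1)"
  have p1: "p1 > 0" "p2 > 0" unfolding p1_def p2_def using psi_pos assms(2) by auto
  show "\<exists>c<0. \<forall>muC muD sCC sCD sDD t.
        Fval d \<theta> muC muD (sCC(k := (sCC k)(l := sCC k l + t))) sCD sDD
          = Fval d \<theta> muC muD sCC sCD sDD + c * t"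
  proof (intro exI[of _ "- B * p2"] conjI allI)
    show "- B * p2 < 0" using Bpos p1 by simp
    fix muC muD sCC sCD sDD t
    show "Fval d \<theta> muC muD (sCC(k := (sCC k)(l := sCC k l + t))) sCD sDD
          = Fval d \<theta> muC muD sCC sCD sDD + - B * p2 * t"
      unfolding Fval_def
      apply (subst dsum_upd[OF kd ld, where g = "\<lambda>k' l' x. real ((d-1) choose k') * real ((d-1) choose l') *
        (- psi \<theta> (2*d+1) (k'+l'+2) * (x - sCD k' l') + psi \<theta> (2*d+1) (k'+l'+1) * (sDD k' l' - sCD k' l'))"])
      by (simp add: B_def p2_def algebra_simps)
  qed
  show "\<exists>c>0. \<forall>muC muD sCC sCD sDD t.
        Fval d \<theta> muC muD sCC sCD (sDD(k := (sDD k)(l := sDD k l + t)))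
          = Fval d \<theta> muC muD sCC sCD sDD + c * t"
  proof (intro exI[of _ "B * p1"] conjI allI)
    show "B * p1 > 0" using Bpos p1 by simp
    fix muC muD sCC sCD sDD t
    show "Fval d \<theta> muC muD sCC sCD (sDD(k := (sDD k)(l := sDD k l + t)))
          = Fval d \<theta> muC muD sCC sCD sDD + B * p1 * t"
      unfolding Fval_def
      apply (subst dsum_upd[OF kd ld, where g = "\<lambda>k' l' x. real ((d-1) choose k') * real ((d-1) choose l') *
        (- psi \<theta> (2*d+1) (k'+l'+2) * (sCC k' l' - sCD k' l') + psi \<theta> (2*d+1) (k'+l'+1) * (x - sCD k' l'))"])
      by (simp add: B_def p1_def algebra_simps)
  qed
  have step: "p2 * (\<theta> + real (2*d - 1 - k - l)) = p1 * (\<theta> + real (k + l + 1))"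
    unfolding p1_def p2_def using psi_step[of "2*d+1" "k+l+1" "2*d-1-k-l" \<theta>] kd ld
    by (simp add: add.commute add.left_commute)
  have sgn: "(if k + l > d - 1 then B * (p2 - p1) > 0 else if k + l < d - 1 then B * (p2 - p1) < 0 else B * (p2 - p1) = 0)"
  proof -
    have q: "\<theta> + real (2*d - 1 - k - l) > 0" using assms(2) by linarith
    have p2e: "p2 = p1 * (\<theta> + real (k + l + 1)) / (\<theta> + real (2*d - 1 - k - l))"
      using step q by (simp add: field_simps)
    have "p2 - p1 = p1 * (real (k + l + 1) - real (2*d - 1 - k - l)) / (\<theta> + real (2*d - 1 - k - l))"
      unfolding p2e using q by (simp add: field_simps)
    moreover have "real (k + l + 1) - real (2*d - 1 - k - l) = 2 * real (k+l) + 2 - 2 * real d"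
      using kd ld by (simp add: of_nat_diff)
    ultimately have e: "p2 - p1 = p1 * (2 * real (k+l) + 2 - 2 * real d) / (\<theta> + real (2*d - 1 - k - l))" by simp
    show ?thesis
    proof (cases "k + l > d - 1")
      case True
      then have "d \<le> k + l" by arith
      then have "real d \<le> real (k+l)" by linarith
      then have "2 * real (k+l) + 2 - 2 * real d > 0" by simp
      then show ?thesis using True e q p1 Bpos by simp
    next
      case False
      show ?thesis
      proof (cases "k + l < d - 1")
        case True
        then have "k + l + 2 \<le> d" by arith
        then have "real (k+l) + 2 \<le> real d" by linarith
        then have "2 * real (k+l) + 2 - 2 * real d < 0" by simp
        then have "p2 - p1 < 0" using e q p1 by (simp add: divide_neg_pos mult_pos_neg)
        then show ?thesis using True False Bpos by (simp add: mult_pos_neg)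
      next
        case F2: False
        then have "k + l + 1 = d" using False assms(1) by arith
        then have "real (k+l) + 1 = real d" by linarith
        then have "2 * real (k+l) + 2 - 2 * real d = 0" by simp
        then show ?thesis using False F2 e by simp
      qed
    qed
  qed
  show "\<exists>c. (if k + l > d - 1 then c > 0 else if k + l < d - 1 then c < 0 else c = 0)
        \<and> (\<forall>muC muD sCC sCD sDD t.
        Fval d \<theta> muC muD sCC (sCD(k := (sCD k)(l := sCD k l + t))) sDD
          = Fval d \<theta> muC muD sCC sCD sDD + c * t)"
  proof (intro exI[of _ "B * (p2 - p1)"] conjI allI)
    show "if k + l > d - 1 then B * (p2 - p1) > 0 else if k + l < d - 1 then B * (p2 - p1) < 0 else B * (p2 - p1) = 0"
      by (rule sgn)
    fix muC muD sCC sCD sDD t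
    show "Fval d \<theta> muC muD sCC (sCD(k := (sCD k)(l := sCD k l + t))) sDD
          = Fval d \<theta> muC muD sCC sCD sDD + B * (p2 - p1) * t"
      unfolding Fval_def
      apply (subst dsum_upd[OF kd ld, where g = "\<lambda>k' l' x. real ((d-1) choose k') * real ((d-1) choose l') *
        (- psi \<theta> (2*d+1) (k'+l'+2) * (sCC k' l' - x) + psi \<theta> (2*d+1) (k'+l'+1) * (sDD k' l' - x))"])
      by (simp add: B_def p1_def p2_def algebra_simps)
  qed
qed

end
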